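(* Let $N^{[0]}$ be a $C^0$ net on the grid $T^{[0]}$ given by $s^{[0]}_i=t^{[0]}_i=i$, $i\in\mathbb{Z}$, having the BMSDD property with constant $L$. Let $\boldsymbol{\gamma}^{[s],[k]}=(\boldsymbol{\alpha}^{[s],[k]},\boldsymbol{\beta}^{[s],[k]})\in\mathscr{W}$ and $\boldsymbol{\gamma}^{[t],[k]}=(\boldsymbol{\alpha}^{[t],[k]},\boldsymbol{\beta}^{[t],[k]})\in\mathscr{W}$, $k\ge 0$, satisfy $$\mu^*:=\sup_{k\ge0}\max\{\mu(\boldsymbol{\gamma}^{[s],[k]}),\mu(\boldsymbol{\gamma}^{[t],[k]})\}<\frac{\sqrt3}{3}.$$ Then the corner cutting algorithm for nets of functions (described in the context) starting from $N^{[0]}$ with these weights is convergent, i.e. the sequence of piecewise Coons patches $\mathcal{C}(N^{[k]})$, $k\ge0$, converges uniformly on $\mathbb{R}^2$.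
   Context: Weights: $\mathscr{W}$ is the set of pairs $(\boldsymbol{\alpha},\boldsymbol{\beta})$ of real bi-infinite sequences with $\inf_{i\in\mathbb{Z}}\min\{\alpha_i,1-\beta_i,\beta_i-\alpha_i\}>0$, and $\mu(\boldsymbol{\alpha},\boldsymbol{\beta}):=\sup_{i\in\mathbb{Z}}\max\{\beta_i-\alpha_i,\,1-\beta_{i-1}+\alpha_i\}$. Grids and nets: for strictly increasing bi-infinite real sequences $(s_i)_{i\in\mathbb{Z}}$, $(t_j)_{j\in\mathbb{Z}}$, unbounded above and below, the grid is $T=\bigcup_i\{s_i\}\times\mathbb{R}\ \cup\ \bigcup_j\mathbb{R}\times\{t_j\}$. A net $N=N(T)$ is a function on $T$ (with values in $\mathbb{R}^m$); it is a $C^0$ net if all u-functions $\phi_j(s)=N(s,t_j)$, $\psi_i(t)=N(s_i,t)$ are continuous on $\mathbb{R}$ (and compatible, $\phi_j(s_i)=\psi_i(t_j)$). The piecewise Coons patch $\mathcal{C}(N):\mathbb{R}^2\to\mathbb{R}^m$ is defined on each rectangle $[s_i,s_{i+1}]\times[t_j,t_{j+1}]$, with $h_1=s_{i+1}-s_i$, $h_2=t_{j+1}-t_j$, by $\mathcal{C}(N)(s,t)=\frac{s_{i+1}-s}{h_1}N(s_i,t)+\frac{s-s_i}{h_1}N(s_{i+1},t)+\frac{t_{j+1}-t}{h_2}N(s,t_j)+\frac{t-t_j}{h_2}N(s,t_{j+1})-B(s,t)$, where $B(s,t)=\frac{s_{i+1}-s}{h_1}\big(\frac{t_{j+1}-t}{h_2}N(s_i,t_j)+\frac{t-t_j}{h_2}N(s_i,t_{j+1})\big)+\frac{s-s_i}{h_1}\big(\frac{t_{j+1}-t}{h_2}N(s_{i+1},t_j)+\frac{t-t_j}{h_2}N(s_{i+1},t_{j+1})\big)$.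 BMSDD: for $\sigma_1\ne\sigma_2$, $\tau_1\ne\tau_2$, $[\sigma_1,\sigma_2;\tau_1,\tau_2]N=\frac{N(\sigma_1,\tau_1)+N(\sigma_2,\tau_2)-N(\sigma_2,\tau_1)-N(\sigma_1,\tau_2)}{(\sigma_1-\sigma_2)(\tau_1-\tau_2)}$; a net $N(T)$ has the BMSDD property with constant $L$ if $\|[\sigma_1,\sigma_2;\tau_1,\tau_2]N\|_\infty\le L$ whenever $\sigma_1\ne\sigma_2$, $\tau_1\ne\tau_2$ and all four points $(\sigma_i,\tau_j)$, $i,j\in\{1,2\}$, lie in $T$. Algorithm: given $N^{[k]}$ on the grid $T^{[k]}$ with lines $s^{[k]}_i$, $t^{[k]}_j$, set $s^{[k+1]}_{2i}=(1-\alpha^{[s],[k]}_i)s^{[k]}_i+\alpha^{[s],[k]}_is^{[k]}_{i+1}$, $s^{[k+1]}_{2i+1}=(1-\beta^{[s],[k]}_i)s^{[k]}_i+\beta^{[s],[k]}_is^{[k]}_{i+1}$, and analogously $t^{[k+1]}_{2j},t^{[k+1]}_{2j+1}$ using $\boldsymbol{\gamma}^{[t],[k]}$; let $T^{[k+1]}$ be the grid with lines $s^{[k+1]}_i$, $t^{[k+1]}_j$, and $N^{[k+1]}=\mathcal{C}(N^{[k]})|_{T^{[k+1]}}$. *)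

theory Defs
  imports "HOL-Analysis.Analysis"
begin

definition weights :: "((int \<Rightarrow> real) \<times> (int \<Rightarrow> real)) set" where
  "weights = {(a, b). \<exists>\<delta>>0. \<forall>i. \<delta> \<le> a i \<and> \<delta> \<le> 1 - b i \<and> \<delta> \<le> b i - a i}"

definition mu :: "(int \<Rightarrow> real) \<times> (int \<Rightarrow> real) \<Rightarrow> real" where
  "mu w = (SUP i. max (snd w i - fst w i) (1 - snd w (i - 1) + fst w i))"

definition in_grid :: "(int \<Rightarrow> real) \<Rightarrow> (int \<Rightarrow> real) \<Rightarrow> real \<Rightarrow> real \<Rightarrow> bool" where
  "in_grid s t x y \<longleftrightarrow> x \<in> range s \<or> y \<in> range t"

text \<open>A net is represented by a function on R^2; only its values on the grid matter.\<close>
definition C0_net :: "(int \<Rightarrow> real) \<Rightarrow> (int \<Rightarrow> real) \<Rightarrow> (real \<Rightarrow> real \<Rightarrow> 'a::topological_space) \<Rightarrow> bool" where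
  "C0_net s t N \<longleftrightarrow> (\<forall>j. continuous_on UNIV (\<lambda>x. N x (t j))) \<and> (\<forall>i. continuous_on UNIV (\<lambda>y. N (s i) y))"

definition bmsdd :: "real \<Rightarrow> real \<Rightarrow> real \<Rightarrow> real \<Rightarrow> (real \<Rightarrow> real \<Rightarrow> 'a::real_vector) \<Rightarrow> 'a" where
  "bmsdd \<sigma>1 \<sigma>2 \<tau>1 \<tau>2 N =
     (1 / ((\<sigma>1 - \<sigma>2) * (\<tau>1 - \<tau>2))) *\<^sub>R (N \<sigma>1 \<tau>1 + N \<sigma>2 \<tau>2 - N \<sigma>2 \<tau>1 - N \<sigma>1 \<tau>2)"

definition has_BMSDD :: "(int \<Rightarrow> real) \<Rightarrow> (int \<Rightarrow> real) \<Rightarrow> (real \<Rightarrow> real \<Rightarrow> 'a::euclidean_space) \<Rightarrow> real \<Rightarrow> bool" where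
  "has_BMSDD s t N L \<longleftrightarrow>
     (\<forall>\<sigma>1 \<sigma>2 \<tau>1 \<tau>2. \<sigma>1 \<noteq> \<sigma>2 \<and> \<tau>1 \<noteq> \<tau>2 \<and>
        in_grid s t \<sigma>1 \<tau>1 \<and> in_grid s t \<sigma>1 \<tau>2 \<and> in_grid s t \<sigma>2 \<tau>1 \<and> in_grid s t \<sigma>2 \<tau>2
        \<longrightarrow> infnorm (bmsdd \<sigma>1 \<sigma>2 \<tau>1 \<tau>2 N) \<le> L)"

definition cell :: "(int \<Rightarrow> real) \<Rightarrow> real \<Rightarrow> int" where
  "cell s x = (THE i. s i \<le> x \<and> x < s (i + 1))"

definition coons :: "(int \<Rightarrow> real) \<Rightarrow> (int \<Rightarrow> real) \<Rightarrow> (real \<Rightarrow> real \<Rightarrow> 'a::real_vector) \<Rightarrow> real \<Rightarrow> real \<Rightarrow> 'a" where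
  "coons s t N x y =
    (let i = cell s x; j = cell t y;
         s0 = s i; s1 = s (i + 1); t0 = t j; t1 = t (j + 1);
         h1 = s1 - s0; h2 = t1 - t0;
         a0 = (s1 - x) / h1; a1 = (x - s0) / h1;
         b0 = (t1 - y) / h2; b1 = (y - t0) / h2
     in a0 *\<^sub>R N s0 y + a1 *\<^sub>R N s1 y + b0 *\<^sub>R N x t0 + b1 *\<^sub>R N x t1
        - (a0 *\<^sub>R (b0 *\<^sub>R N s0 t0 + b1 *\<^sub>R N s0 t1) + a1 *\<^sub>R (b0 *\<^sub>R N s1 t0 + b1 *\<^sub>R N s1 t1)))"

definition refine :: "(int \<Rightarrow> real) \<times> (int \<Rightarrow> real) \<Rightarrow> (int \<Rightarrow> real) \<Rightarrow> int \<Rightarrow> real" where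
  "refine w s n =
    (let i = n div 2 in
     if even n then (1 - fst w i) * s i + fst w i * s (i + 1)
     else (1 - snd w i) * s i + snd w i * s (i + 1))"

primrec lines :: "(nat \<Rightarrow> (int \<Rightarrow> real) \<times> (int \<Rightarrow> real)) \<Rightarrow> nat \<Rightarrow> int \<Rightarrow> real" where
  "lines w 0 = (\<lambda>i. real_of_int i)"
| "lines w (Suc k) = refine (w k) (lines w k)"

primrec nets :: "(nat \<Rightarrow> (int \<Rightarrow> real) \<times> (int \<Rightarrow> real)) \<Rightarrow> (nat \<Rightarrow> (int \<Rightarrow> real) \<times> (int \<Rightarrow> real))
    \<Rightarrow> (real \<Rightarrow> real \<Rightarrow> 'a::real_vector) \<Rightarrow> nat \<Rightarrow> real \<Rightarrow> real \<Rightarrow> 'a" where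
  "nets ws wt N0 0 = N0"
| "nets ws wt N0 (Suc k) = coons (lines ws k) (lines wt k) (nets ws wt N0 k)"

end

theory Submission
  imports Defs
begin

definition gs :: "(int \<Rightarrow> real) \<Rightarrow> bool" where
  "gs s \<longleftrightarrow> (\<forall>i. s i < s (i+1)) \<and> (\<forall>x. \<exists>i. s i \<le> x) \<and> (\<forall>x. \<exists>i. x < s i)"

lemma gs_less: assumes "gs s" "i < j" shows "s i < s j"
  using assms(2)
proof (induction j rule: int_gr_induct)
  case base then show ?case using assms(1) by (simp add: gs_def)
next
  case (step k) then show ?case using assms(1) unfolding gs_def by (meson less_trans)
qed

lemma gs_le: assumes "gs s" "i \<le> j" shows "s i \<le> s j"
  using gs_less[OF assms(1)] assms(2) by (cases "i = j") (auto intro: less_imp_le)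

lemma gs_cell_exists: assumes "gs s" shows "\<exists>i. s i \<le> x \<and> x < s (i+1)"
proof -
  obtain i0 where i0: "s i0 \<le> x" using assms unfolding gs_def by blast
  obtain j0 where j0: "x < s j0" using assms unfolding gs_def by blast
  have "i0 < j0" using i0 j0 gs_le[OF assms, of j0 i0] by force
  have "\<forall>i. s i \<le> x \<longrightarrow> x < s (i + int n) \<longrightarrow> (\<exists>i. s i \<le> x \<and> x < s (i+1))" for n
  proof (induction n)
    case 0 then show ?case by auto
  next
    case (Suc n)
    show ?case
    proof (intro allI impI)
      fix i assume a: "s i \<le> x" "x < s (i + int (Suc n))"
      show "\<exists>i. s i \<le> x \<and> x < s (i+1)"
      proof (cases "x < s (i+1)")
        case True then show ?thesis using a by blast
      next
        case False
        have "x < s ((i+1) + int n)" using a(2) by (simp add: algebra_simps)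
        moreover have "s (i+1) \<le> x" using False by simp
        ultimately show ?thesis using Suc.IH by blast
      qed
    qed
  qed
  from this[of "nat (j0 - i0)"] show ?thesis using i0 j0 \<open>i0 < j0\<close> by auto
qed

lemma gs_cell_unique: assumes "gs s" "s i \<le> x" "x < s (i+1)" "s j \<le> x" "x < s (j+1)" shows "i = j"
proof (rule ccontr)
  assume "i \<noteq> j"
  then consider "i + 1 \<le> j" | "j + 1 \<le> i" by linarith
  then show False
  proof cases
    case 1 then show False using gs_le[OF assms(1) 1] assms by linarith
  next
    case 2 then show False using gs_le[OF assms(1) 2] assms by linarith
  qed
qed

lemma cell_eq: assumes "gs s" "s i \<le> x" "x < s (i+1)" shows "cell s x = i"
  unfolding cell_def
  using gs_cell_unique[OF assms(1)] assms by (intro the_equality) auto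

lemma cell_prop: assumes "gs s" shows "s (cell s x) \<le> x" "x < s (cell s x + 1)"
proof -
  obtain i where "s i \<le> x" "x < s (i+1)" using gs_cell_exists[OF assms] by blast
  then show "s (cell s x) \<le> x" "x < s (cell s x + 1)" using cell_eq[OF assms] by auto
qed

lemma refine_even: "refine w s (2*m) = (1 - fst w m) * s m + fst w m * s (m+1)"
  by (simp add: refine_def)
lemma refine_odd: "refine w s (2*m+1) = (1 - snd w m) * s m + snd w m * s (m+1)"
  by (simp add: refine_def)

lemma weightsD: assumes "w \<in> weights" shows "0 < fst w i" "fst w i < snd w i" "snd w i < 1"
proof -
  obtain d where d: "d > 0" "\<forall>i. d \<le> fst w i \<and> d \<le> 1 - snd w i \<and> d \<le> snd w i - fst w i"
    using assms by (cases w) (auto simp: weights_def)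
  have "d \<le> fst w i \<and> d \<le> 1 - snd w i \<and> d \<le> snd w i - fst w i" using d(2) by blast
  then show "0 < fst w i" "fst w i < snd w i" "snd w i < 1" using d(1) by linarith+
qed

lemma mu_bdd: assumes "w \<in> weights" shows "bdd_above (range (\<lambda>i. max (snd w i - fst w i) (1 - snd w (i - 1) + fst w i)))"
proof -
  have "max (snd w i - fst w i) (1 - snd w (i - 1) + fst w i) \<le> 2" for i
    using weightsD[OF assms, of i] weightsD[OF assms, of "i-1"] by auto
  then show ?thesis by (intro bdd_aboveI[where M=2]) auto
qed

lemma mu_le2: assumes "w \<in> weights" shows "mu w \<le> 2"
proof -
  have "max (snd w i - fst w i) (1 - snd w (i - 1) + fst w i) \<le> 2" for i
    using weightsD[OF assms, of i] weightsD[OF assms, of "i-1"] by auto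
  then show ?thesis unfolding mu_def by (intro cSUP_least) auto
qed

lemma mu_ge: assumes "w \<in> weights"
  shows "snd w i - fst w i \<le> mu w" "1 - snd w (i - 1) + fst w i \<le> mu w"
proof -
  have "max (snd w i - fst w i) (1 - snd w (i - 1) + fst w i) \<le> mu w"
    unfolding mu_def using mu_bdd[OF assms] by (intro cSUP_upper) auto
  then show "snd w i - fst w i \<le> mu w" "1 - snd w (i - 1) + fst w i \<le> mu w" by auto
qed

lemma refine_step:
  assumes w: "w \<in> weights" and g: "gs s" and h: "\<And>i. s (i+1) - s i \<le> H"
  shows "gs (refine w s)" "\<And>i. refine w s (i+1) - refine w s i \<le> mu w * H"
proof -
  have a: "0 < fst w i" "fst w i < snd w i" "snd w i < 1" for i using weightsD[OF w] by auto
  have pos: "s i < s (i+1)" for i using g by (auto simp: gs_def)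
  have H: "0 \<le> H" using pos[of 0] h[of 0] by linarith
  have both: "0 < refine w s (i+1) - refine w s i \<and> refine w s (i+1) - refine w s i \<le> mu w * H" for i
  proof (cases "even i")
    case True
    then obtain m where m: "i = 2*m" by (auto elim: evenE)
    have e: "refine w s (i+1) - refine w s i = (snd w m - fst w m) * (s (m+1) - s m)"
      unfolding m refine_odd refine_even by (simp add: algebra_simps)
    have "(snd w m - fst w m) * (s (m+1) - s m) \<le> (snd w m - fst w m) * H"
      using a[of m] h[of m] by (intro mult_left_mono) auto
    also have "\<dots> \<le> mu w * H" using mu_ge[OF w, of m] H by (intro mult_right_mono) auto
    finally show ?thesis using e a[of m] pos[of m] by simp
  next
    case False
    then obtain m where m: "i = 2*m+1" using oddE by blast
    have i1: "i + 1 = 2*(m+1)" using m by simp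
    have e: "refine w s (i+1) - refine w s i = fst w (m+1) * (s (m+1+1) - s (m+1)) + (1 - snd w m) * (s (m+1) - s m)"
      unfolding i1 refine_even unfolding m refine_odd by (simp add: algebra_simps)
    have "fst w (m+1) * (s (m+1+1) - s (m+1)) + (1 - snd w m) * (s (m+1) - s m) \<le> fst w (m+1) * H + (1 - snd w m) * H"
      using a[of m] a[of "m+1"] h[of m] h[of "m+1"] by (intro add_mono mult_left_mono) auto
    also have "\<dots> = (1 - snd w ((m+1) - 1) + fst w (m+1)) * H" by (simp add: algebra_simps)
    also have "\<dots> \<le> mu w * H" using mu_ge(2)[OF w, of "m+1"] H by (intro mult_right_mono) auto
    finally show ?thesis using e a[of m] a[of "m+1"] pos[of m] pos[of "m+1"]
      by (simp add: add_pos_pos)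
  qed
  show "\<And>i. refine w s (i+1) - refine w s i \<le> mu w * H" using both by blast
  have lo: "\<exists>i. refine w s i \<le> x" for x
  proof -
    obtain j where j: "s j \<le> x" using g unfolding gs_def by blast
    have "refine w s (2*(j-1)+1) \<le> s j"
    proof -
      have "(1 - snd w (j-1)) * (s (j-1) - s j) \<le> 0"
        using a[of "j-1"] pos[of "j-1"] by (intro mult_nonneg_nonpos) auto
      then show ?thesis unfolding refine_odd by (simp add: algebra_simps)
    qed
    then show ?thesis using j by (meson order_trans)
  qed
  have hi: "\<exists>i. x < refine w s i" for x
  proof -
    obtain j where j: "x < s j" using g unfolding gs_def by blast
    have "s j \<le> refine w s (2*j)"
      unfolding refine_even using a[of j] pos[of j] by (simp add: algebra_simps)
    then show ?thesis using j by (meson less_le_trans)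
  qed
  show "gs (refine w s)" unfolding gs_def using both lo hi by force
qed

lemma lines_prop:
  assumes w: "\<And>k. w k \<in> weights" and mu: "\<And>k. mu (w k) \<le> m" and m: "0 \<le> m"
  shows "gs (lines w k) \<and> (\<forall>i. lines w k (i+1) - lines w k i \<le> m ^ k)"
proof (induction k)
  case 0
  have "gs (\<lambda>i. real_of_int i)" unfolding gs_def
  proof (intro conjI allI)
    fix x :: real
    show "\<exists>i. real_of_int i \<le> x" by (rule exI[of _ "floor x"]) simp
    show "\<exists>i. x < real_of_int i" by (rule exI[of _ "floor x + 1"]) linarith
  qed simp
  then show ?case by simp
next
  case (Suc k)
  have 1: "gs (lines w (Suc k))" using refine_step(1)[OF w Suc[THEN conjunct1]] Suc by auto
  have "lines w (Suc k) (i+1) - lines w (Suc k) i \<le> m ^ Suc k" for i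
  proof -
    have "lines w (Suc k) (i+1) - lines w (Suc k) i \<le> mu (w k) * m ^ k"
      using refine_step(2)[OF w Suc[THEN conjunct1], of "m ^ k"] Suc by auto
    also have "\<dots> \<le> m * m ^ k" using mu[of k] m by (intro mult_right_mono) auto
    finally show ?thesis by simp
  qed
  then show ?case using 1 by blast
qed

definition cf :: "(int \<Rightarrow> real) \<Rightarrow> (int \<Rightarrow> real) \<Rightarrow> (real \<Rightarrow> real \<Rightarrow> 'a::real_vector) \<Rightarrow> int \<Rightarrow> int \<Rightarrow> real \<Rightarrow> real \<Rightarrow> 'a" where
  "cf s t N i j x y =
    ((s (i+1) - x) / (s (i+1) - s i)) *\<^sub>R N (s i) y + ((x - s i) / (s (i+1) - s i)) *\<^sub>R N (s (i+1)) y
    + ((t (j+1) - y) / (t (j+1) - t j)) *\<^sub>R N x (t j) + ((y - t j) / (t (j+1) - t j)) *\<^sub>R N x (t (j+1))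
    - (((s (i+1) - x) / (s (i+1) - s i)) *\<^sub>R (((t (j+1) - y) / (t (j+1) - t j)) *\<^sub>R N (s i) (t j) + ((y - t j) / (t (j+1) - t j)) *\<^sub>R N (s i) (t (j+1)))
     + ((x - s i) / (s (i+1) - s i)) *\<^sub>R (((t (j+1) - y) / (t (j+1) - t j)) *\<^sub>R N (s (i+1)) (t j) + ((y - t j) / (t (j+1) - t j)) *\<^sub>R N (s (i+1)) (t (j+1))))"

lemma coons_cf: "coons s t N x y = cf s t N (cell s x) (cell t y) x y"
  by (simp add: coons_def cf_def Let_def)

lemma cf_edge_x: assumes "s (i+1) \<noteq> s i" "x = s i \<or> x = s (i+1)" shows "cf s t N i j x y = N x y"
proof -
  have h: "s (i+1) - s i \<noteq> 0" using assms by simp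
  from assms(2) show ?thesis
  proof
    assume x: "x = s i"
    show ?thesis unfolding cf_def x using h by (simp add: algebra_simps)
  next
    assume x: "x = s (i+1)"
    show ?thesis unfolding cf_def x using h by (simp add: algebra_simps)
  qed
qed

lemma cf_edge_y: assumes "t (j+1) \<noteq> t j" "y = t j \<or> y = t (j+1)" shows "cf s t N i j x y = N x y"
proof -
  have h: "t (j+1) - t j \<noteq> 0" using assms by simp
  from assms(2) show ?thesis
  proof
    assume y: "y = t j"
    show ?thesis unfolding cf_def y using h by (simp add: algebra_simps scaleR_add_right[symmetric] scaleR_add_left[symmetric])
  next
    assume y: "y = t (j+1)"
    show ?thesis unfolding cf_def y using h by (simp add: algebra_simps scaleR_add_right[symmetric] scaleR_add_left[symmetric])
  qed
qed

definition Dl :: "(real \<Rightarrow> real \<Rightarrow> 'a::real_vector) \<Rightarrow> real \<Rightarrow> real \<Rightarrow> real \<Rightarrow> real \<Rightarrow> 'a" where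
  "Dl G a b c d = G a c + G b d - G b c - G a d"
definition cfr :: "real \<Rightarrow> real \<Rightarrow> real \<Rightarrow> real \<Rightarrow> (real \<Rightarrow> real \<Rightarrow> 'a::real_vector) \<Rightarrow> real \<Rightarrow> real \<Rightarrow> 'a" where
  "cfr s0 s1 t0 t1 N x y =
    ((s1 - x) / (s1 - s0)) *\<^sub>R N s0 y + ((x - s0) / (s1 - s0)) *\<^sub>R N s1 y
    + ((t1 - y) / (t1 - t0)) *\<^sub>R N x t0 + ((y - t0) / (t1 - t0)) *\<^sub>R N x t1
    - (((s1 - x) / (s1 - s0)) *\<^sub>R (((t1 - y) / (t1 - t0)) *\<^sub>R N s0 t0 + ((y - t0) / (t1 - t0)) *\<^sub>R N s0 t1)
     + ((x - s0) / (s1 - s0)) *\<^sub>R (((t1 - y) / (t1 - t0)) *\<^sub>R N s1 t0 + ((y - t0) / (t1 - t0)) *\<^sub>R N s1 t1))"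
lemma cf_cfr: "cf s t N i j = cfr (s i) (s (i+1)) (t j) (t (j+1)) N"
  by (intro ext) (simp add: cf_def cfr_def)
definition cfp :: "real \<Rightarrow> real \<Rightarrow> real \<Rightarrow> real \<Rightarrow> (real \<Rightarrow> real \<Rightarrow> 'a::real_vector) \<Rightarrow> real \<Rightarrow> real \<Rightarrow> real \<Rightarrow> real \<Rightarrow> 'a" where
  "cfp s0 s1 t0 t1 N p q x y =
    (1 - (x - s0) * p) *\<^sub>R N s0 y + ((x - s0) * p) *\<^sub>R N s1 y
    + (1 - (y - t0) * q) *\<^sub>R N x t0 + ((y - t0) * q) *\<^sub>R N x t1
    - ((1 - (x - s0) * p) *\<^sub>R ((1 - (y - t0) * q) *\<^sub>R N s0 t0 + ((y - t0) * q) *\<^sub>R N s0 t1)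
     + ((x - s0) * p) *\<^sub>R ((1 - (y - t0) * q) *\<^sub>R N s1 t0 + ((y - t0) * q) *\<^sub>R N s1 t1))"

lemma cfr_cfp: assumes h1: "s1 \<noteq> s0" and h2: "t1 \<noteq> t0"
  shows "cfr s0 s1 t0 t1 N = cfp s0 s1 t0 t1 N (1 / (s1 - s0)) (1 / (t1 - t0))"
proof -
  have h1': "s1 - s0 \<noteq> 0" and h2': "t1 - t0 \<noteq> 0" using assms by auto
  have e1: "(s1 - x) / (s1 - s0) = 1 - (x - s0) * (1 / (s1 - s0))" for x using h1' by (simp add: field_simps)
  have e2: "(t1 - y) / (t1 - t0) = 1 - (y - t0) * (1 / (t1 - t0))" for y using h2' by (simp add: field_simps)
  have e3: "(x - s0) / (s1 - s0) = (x - s0) * (1 / (s1 - s0))" for x by simp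
  have e4: "(y - t0) / (t1 - t0) = (y - t0) * (1 / (t1 - t0))" for y by simp
  show ?thesis by (intro ext) (simp only: cfr_def cfp_def e1 e2 e3 e4)
qed

lemma cfp_Dl:
  fixes N :: "real \<Rightarrow> real \<Rightarrow> 'a::euclidean_space"
  shows "Dl (cfp s0 s1 t0 t1 N p q) a b c d =
     ((a - b) * p) *\<^sub>R Dl N s1 s0 c d
   + ((c - d) * q) *\<^sub>R Dl N a b t1 t0
   - ((a - b) * (c - d) * (p * q)) *\<^sub>R Dl N s1 s0 t1 t0"
  apply (rule euclidean_eqI) 
  apply (simp add: cfp_def Dl_def inner_simps)
  apply (simp add: algebra_simps)
  done

lemma err_gen:
  fixes G P0 P1 Q0 Q1 c00 c01 c10 c11 :: "'a::real_vector"
  assumes "a0 + a1 = 1" "b0 + b1 = 1"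
  shows "G - (a0 *\<^sub>R P0 + a1 *\<^sub>R P1 + b0 *\<^sub>R Q0 + b1 *\<^sub>R Q1
      - (a0 *\<^sub>R (b0 *\<^sub>R c00 + b1 *\<^sub>R c01) + a1 *\<^sub>R (b0 *\<^sub>R c10 + b1 *\<^sub>R c11)))
    = (a0 * b0) *\<^sub>R (G + c00 - P0 - Q0) + (a0 * b1) *\<^sub>R (G + c01 - P0 - Q1)
    + (a1 * b0) *\<^sub>R (G + c10 - P1 - Q0) + (a1 * b1) *\<^sub>R (G + c11 - P1 - Q1)"
proof -
  have a1: "a1 = 1 - a0" and b1: "b1 = 1 - b0" using assms by auto
  show ?thesis unfolding a1 b1 by (simp add: algebra_simps)
qed

lemma err_identity:
  fixes G :: "real \<Rightarrow> real \<Rightarrow> 'a::real_vector"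
  assumes h1: "s1 \<noteq> s0" and h2: "t1 \<noteq> t0"
  shows "G x y - cfr s0 s1 t0 t1 G x y =
     (((s1 - x) / (s1 - s0)) * ((t1 - y) / (t1 - t0))) *\<^sub>R Dl G x s0 y t0
   + (((s1 - x) / (s1 - s0)) * ((y - t0) / (t1 - t0))) *\<^sub>R Dl G x s0 y t1
   + (((x - s0) / (s1 - s0)) * ((t1 - y) / (t1 - t0))) *\<^sub>R Dl G x s1 y t0
   + (((x - s0) / (s1 - s0)) * ((y - t0) / (t1 - t0))) *\<^sub>R Dl G x s1 y t1"
proof -
  have h1': "s1 - s0 \<noteq> 0" and h2': "t1 - t0 \<noteq> 0" using assms by auto
  have e1: "(s1 - x) / (s1 - s0) + (x - s0) / (s1 - s0) = 1"
    using h1' by (simp add: add_divide_distrib[symmetric])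
  have e2: "(t1 - y) / (t1 - t0) + (y - t0) / (t1 - t0) = 1"
    using h2' by (simp add: add_divide_distrib[symmetric])
  show ?thesis unfolding cfr_def Dl_def by (rule err_gen[OF e1 e2])
qed

definition gridb :: "(int \<Rightarrow> real) \<Rightarrow> (int \<Rightarrow> real) \<Rightarrow> (real \<Rightarrow> real \<Rightarrow> 'a::euclidean_space) \<Rightarrow> real \<Rightarrow> bool" where
  "gridb s t N M \<longleftrightarrow> (\<forall>a b c d. in_grid s t a c \<and> in_grid s t a d \<and> in_grid s t b c \<and> in_grid s t b d
      \<longrightarrow> infnorm (Dl N a b c d) \<le> M * \<bar>a - b\<bar> * \<bar>c - d\<bar>)"

lemma infnorm_tri3: fixes x :: "'a::euclidean_space" shows "infnorm (x + y - z) \<le> infnorm x + infnorm y + infnorm z"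
proof -
  have "infnorm (x + y - z) \<le> infnorm (x + y) + infnorm (- z)"
    using infnorm_triangle[of "x + y" "- z"] by simp
  then show ?thesis using infnorm_triangle[of x y] infnorm_neg[of z] by linarith
qed

lemma incell:
  fixes N :: "real \<Rightarrow> real \<Rightarrow> 'a::euclidean_space"
  assumes lt: "s0 < s1" "t0 < t1" and rg: "s0 \<in> range s" "s1 \<in> range s" "t0 \<in> range t" "t1 \<in> range t"
    and g: "gridb s t N M"
    and ab: "a \<in> {s0..s1}" "b \<in> {s0..s1}" and cd: "c \<in> {t0..t1}" "d \<in> {t0..t1}"
  shows "infnorm (Dl (cfr s0 s1 t0 t1 N) a b c d) \<le> 3 * M * \<bar>a - b\<bar> * \<bar>c - d\<bar>"
proof -
  define p where "p = 1 / (s1 - s0)"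
  define q where "q = 1 / (t1 - t0)"
  have p: "p > 0" "p * (s1 - s0) = 1" using lt by (auto simp: p_def)
  have q: "q > 0" "q * (t1 - t0) = 1" using lt by (auto simp: q_def)
  have eq: "Dl (cfr s0 s1 t0 t1 N) a b c d =
     ((a - b) * p) *\<^sub>R Dl N s1 s0 c d + ((c - d) * q) *\<^sub>R Dl N a b t1 t0
   - ((a - b) * (c - d) * (p * q)) *\<^sub>R Dl N s1 s0 t1 t0"
    unfolding cfr_cfp[OF less_imp_neq[OF lt(1), symmetric] less_imp_neq[OF lt(2), symmetric]] cfp_Dl p_def q_def ..
  have gb: "\<And>a b c d. in_grid s t a c \<and> in_grid s t a d \<and> in_grid s t b c \<and> in_grid s t b d
      \<Longrightarrow> infnorm (Dl N a b c d) \<le> M * \<bar>a - b\<bar> * \<bar>c - d\<bar>" using g unfolding gridb_def by blast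
  have igs: "in_grid s t s0 y" "in_grid s t s1 y" "in_grid s t x t0" "in_grid s t x t1" for x y
    using rg by (simp_all add: in_grid_def)
  have E1: "infnorm (Dl N s1 s0 c d) \<le> M * (s1 - s0) * \<bar>c - d\<bar>"
  proof -
    have "infnorm (Dl N s1 s0 c d) \<le> M * \<bar>s1 - s0\<bar> * \<bar>c - d\<bar>" by (rule gb) (simp only: igs)
    then show ?thesis using lt by simp
  qed
  have E2: "infnorm (Dl N a b t1 t0) \<le> M * \<bar>a - b\<bar> * (t1 - t0)"
  proof -
    have "infnorm (Dl N a b t1 t0) \<le> M * \<bar>a - b\<bar> * \<bar>t1 - t0\<bar>" by (rule gb) (simp only: igs)
    then show ?thesis using lt by simp
  qed
  have E3: "infnorm (Dl N s1 s0 t1 t0) \<le> M * (s1 - s0) * (t1 - t0)"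
  proof -
    have "infnorm (Dl N s1 s0 t1 t0) \<le> M * \<bar>s1 - s0\<bar> * \<bar>t1 - t0\<bar>" by (rule gb) (simp only: igs)
    then show ?thesis using lt by simp
  qed
  have T1: "infnorm (((a - b) * p) *\<^sub>R Dl N s1 s0 c d) \<le> M * \<bar>a - b\<bar> * \<bar>c - d\<bar>"
  proof -
    have "infnorm (((a - b) * p) *\<^sub>R Dl N s1 s0 c d) = \<bar>a - b\<bar> * p * infnorm (Dl N s1 s0 c d)"
      by (simp only: infnorm_mul abs_mult abs_of_pos[OF p(1)])
    also have "\<dots> \<le> \<bar>a - b\<bar> * p * (M * (s1 - s0) * \<bar>c - d\<bar>)"
      by (intro mult_left_mono) (use p E1 in auto)
    also have "\<dots> = M * \<bar>a - b\<bar> * \<bar>c - d\<bar> * (p * (s1 - s0))" by (simp only: mult_ac)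
    also have "\<dots> = M * \<bar>a - b\<bar> * \<bar>c - d\<bar>" using p(2) by simp
    finally show ?thesis .
  qed
  have T2: "infnorm (((c - d) * q) *\<^sub>R Dl N a b t1 t0) \<le> M * \<bar>a - b\<bar> * \<bar>c - d\<bar>"
  proof -
    have "infnorm (((c - d) * q) *\<^sub>R Dl N a b t1 t0) = \<bar>c - d\<bar> * q * infnorm (Dl N a b t1 t0)"
      by (simp only: infnorm_mul abs_mult abs_of_pos[OF q(1)])
    also have "\<dots> \<le> \<bar>c - d\<bar> * q * (M * \<bar>a - b\<bar> * (t1 - t0))"
      by (intro mult_left_mono) (use q E2 in auto)
    also have "\<dots> = M * \<bar>a - b\<bar> * \<bar>c - d\<bar> * (q * (t1 - t0))" by (simp only: mult_ac)
    also have "\<dots> = M * \<bar>a - b\<bar> * \<bar>c - d\<bar>" using q(2) by simp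
    finally show ?thesis .
  qed
  have pq: "p * q > 0" using p q by simp
  have T3: "infnorm (((a - b) * (c - d) * (p * q)) *\<^sub>R Dl N s1 s0 t1 t0) \<le> M * \<bar>a - b\<bar> * \<bar>c - d\<bar>"
  proof -
    have "infnorm (((a - b) * (c - d) * (p * q)) *\<^sub>R Dl N s1 s0 t1 t0) = \<bar>a - b\<bar> * \<bar>c - d\<bar> * (p * q) * infnorm (Dl N s1 s0 t1 t0)"
      by (simp only: infnorm_mul abs_mult abs_of_pos[OF p(1)] abs_of_pos[OF q(1)])
    also have "\<dots> \<le> \<bar>a - b\<bar> * \<bar>c - d\<bar> * (p * q) * (M * (s1 - s0) * (t1 - t0))"
      by (intro mult_left_mono) (use pq E3 in auto)
    also have "\<dots> = M * \<bar>a - b\<bar> * \<bar>c - d\<bar> * ((p * (s1 - s0)) * (q * (t1 - t0)))" by (simp only: mult_ac)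
    also have "\<dots> = M * \<bar>a - b\<bar> * \<bar>c - d\<bar>" using p(2) q(2) by simp
    finally show ?thesis .
  qed
  have "infnorm (Dl (cfr s0 s1 t0 t1 N) a b c d) \<le> infnorm (((a - b) * p) *\<^sub>R Dl N s1 s0 c d) + infnorm (((c - d) * q) *\<^sub>R Dl N a b t1 t0)
     + infnorm (((a - b) * (c - d) * (p * q)) *\<^sub>R Dl N s1 s0 t1 t0)" unfolding eq by (rule infnorm_tri3)
  then show ?thesis using T1 T2 T3 by linarith
qed

lemma coons_cell:
  assumes gs: "gs s" "gs t" and x: "s i \<le> x" "x \<le> s (i+1)" and y: "t j \<le> y" "y \<le> t (j+1)"
  shows "coons s t N x y = cfr (s i) (s (i+1)) (t j) (t (j+1)) N x y"
proof -
  have ns: "s (k+1) \<noteq> s k" for k using gs(1) unfolding gs_def by (metis less_irrefl)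
  have nt: "t (k+1) \<noteq> t k" for k using gs(2) unfolding gs_def by (metis less_irrefl)
  have c: "coons s t N x y = cf s t N (cell s x) (cell t y) x y" by (rule coons_cf)
  show ?thesis
  proof (cases "x = s (i+1)")
    case True
    have "s (i+1) < s ((i+1)+1)" using gs(1) unfolding gs_def by blast
    then have "cell s x = i + 1" using cell_eq[OF gs(1), of "i+1" x] True by simp
    moreover have "cf s t N (i+1) (cell t y) x y = N x y"
      by (rule cf_edge_x[where s=s and i="i+1"]) (use ns[of "i+1"] True in auto)
    ultimately have "coons s t N x y = N x y" using c by simp
    moreover have "cf s t N i j x y = N x y"
      by (rule cf_edge_x[where s=s and i=i]) (use ns True in auto)
    ultimately show ?thesis by (simp add: cf_cfr)
  next
    case xF: False
    show ?thesis
    proof (cases "y = t (j+1)")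
      case True
      have "t (j+1) < t ((j+1)+1)" using gs(2) unfolding gs_def by blast
      then have "cell t y = j + 1" using cell_eq[OF gs(2), of "j+1" y] True by simp
      moreover have "cf s t N (cell s x) (j+1) x y = N x y"
        by (rule cf_edge_y[where t=t and j="j+1"]) (use nt[of "j+1"] True in auto)
      ultimately have "coons s t N x y = N x y" using c by simp
      moreover have "cf s t N i j x y = N x y"
        by (rule cf_edge_y[where t=t and j=j]) (use nt True in auto)
      ultimately show ?thesis by (simp add: cf_cfr)
    next
      case False
      have "cell s x = i" using cell_eq[OF gs(1)] x xF by auto
      moreover have "cell t y = j" using cell_eq[OF gs(2)] y False by auto
      ultimately show ?thesis using c by (simp add: cf_cfr)
    qed
  qed
qed

lemma ext1d:
  fixes D :: "real \<Rightarrow> real \<Rightarrow> 'a::euclidean_space"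
  assumes g: "gs s" and add: "\<And>a b c. D a c = D a b + D b c"
    and loc: "\<And>i a b. s i \<le> a \<Longrightarrow> a \<le> b \<Longrightarrow> b \<le> s (i+1) \<Longrightarrow> infnorm (D a b) \<le> K * (b - a)"
  shows "infnorm (D a b) \<le> K * \<bar>b - a\<bar>"
proof -
  have cp: "s (cell s x) \<le> x" "x < s (cell s x + 1)" for x using cell_prop[OF g] by auto
  have ord: "infnorm (D a b) \<le> K * (b - a)" if "a \<le> b" "cell s b - cell s a = int n" for n a b
    using that
  proof (induction n arbitrary: a)
    case 0
    then have e: "cell s b = cell s a" by simp
    have "b \<le> s (cell s a + 1)" using cp(2)[of b] unfolding e by simp
    then show ?case using loc[of "cell s a" a b] cp(1)[of a] 0(1) by blast
  next
    case (Suc n)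
    define c where "c = s (cell s a + 1)"
    have ac: "a \<le> c" using cp(2)[of a] by (simp add: c_def)
    have "s (cell s a + 1) < s ((cell s a + 1) + 1)" using g unfolding gs_def by blast
    then have cc: "cell s c = cell s a + 1" unfolding c_def
      using cell_eq[OF g, of "cell s a + 1"] by simp
    have "cell s a + 1 \<le> cell s b" using Suc.prems(2) by simp
    then have "s (cell s a + 1) \<le> s (cell s b)" by (rule gs_le[OF g])
    then have cb: "c \<le> b" unfolding c_def using cp(1)[of b] by linarith
    have 1: "infnorm (D a c) \<le> K * (c - a)"
      using loc[of "cell s a" a c] cp(1)[of a] ac unfolding c_def by blast
    have "cell s b - cell s c = int n" using cc Suc.prems(2) by simp
    then have 2: "infnorm (D c b) \<le> K * (b - c)" using Suc.IH[OF cb] by blast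
    have "D a b = D a c + D c b" by (rule add)
    then have "infnorm (D a b) \<le> infnorm (D a c) + infnorm (D c b)" using infnorm_triangle[of "D a c" "D c b"] by simp
    then show ?case using 1 2 by (simp add: algebra_simps)
  qed
  have ord2: "infnorm (D a b) \<le> K * (b - a)" if "a \<le> b" for a b
  proof -
    have "cell s a \<le> cell s b"
    proof (rule ccontr)
      assume "\<not> cell s a \<le> cell s b"
      then have "cell s b + 1 \<le> cell s a" by simp
      then have "s (cell s b + 1) \<le> s (cell s a)" by (rule gs_le[OF g])
      then show False using cp(1)[of a] cp(2)[of b] that by linarith
    qed
    then have "cell s b - cell s a = int (nat (cell s b - cell s a))" by simp
    then show ?thesis using ord[OF that] by blast
  qed
  have z: "D a a = 0" for a using add[of a a a] by simp
  have neg: "D b a = - D a b" for a b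
  proof -
    have "D a b + D b a = D a a" by (rule add[symmetric])
    also have "\<dots> = 0" by (rule z)
    finally have h: "D a b + D b a = 0" .
    show ?thesis using h by (metis add.commute eq_neg_iff_add_eq_0)
  qed
  show ?thesis
  proof (cases "a \<le> b")
    case True then show ?thesis using ord2 by simp
  next
    case False
    then have "infnorm (D b a) \<le> K * (a - b)" using ord2[of b a] by simp
    then show ?thesis using neg[of a b] infnorm_neg[of "D a b"] False by simp
  qed
qed

lemma Dl_add1: "Dl G a c x y = Dl G a b x y + Dl G b c x y" by (simp add: Dl_def algebra_simps)
lemma Dl_add2: "Dl G a b x z = Dl G a b x y + Dl G a b y z" by (simp add: Dl_def algebra_simps)

lemma gbound:
  fixes N :: "real \<Rightarrow> real \<Rightarrow> 'a::euclidean_space"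
  assumes gs: "gs s" "gs t" and g: "gridb s t N M"
  shows "infnorm (Dl (coons s t N) a b c d) \<le> 3 * M * \<bar>a - b\<bar> * \<bar>c - d\<bar>"
proof -
  define G where "G = coons s t N"
  have ls: "s i < s (i+1)" for i using gs(1) unfolding gs_def by blast
  have lt: "t i < t (i+1)" for i using gs(2) unfolding gs_def by blast
  have A: "infnorm (Dl G a b c d) \<le> 3 * M * \<bar>c - d\<bar> * \<bar>b - a\<bar>"
    if cd: "t j \<le> c" "c \<le> t (j+1)" "t j \<le> d" "d \<le> t (j+1)" for a b c d j
  proof (rule ext1d[OF gs(1), where D = "\<lambda>a b. Dl G a b c d"])
    show "Dl G a c' c d = Dl G a b' c d + Dl G b' c' c d" for a b' c' by (rule Dl_add1)
    fix i a b assume ab: "s i \<le> a" "a \<le> b" "b \<le> s (i+1)"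
    have e: "Dl G a b c d = Dl (cfr (s i) (s (i+1)) (t j) (t (j+1)) N) a b c d"
      unfolding Dl_def G_def using ab cd
      by (simp add: coons_cell[OF gs, of i _ j])
    have "infnorm (Dl G a b c d) \<le> 3 * M * \<bar>a - b\<bar> * \<bar>c - d\<bar>"
      unfolding e by (rule incell[OF ls lt rangeI rangeI rangeI rangeI g]) (use ab cd in auto)
    also have "\<dots> = 3 * M * \<bar>c - d\<bar> * (b - a)" using ab by (simp add: abs_if mult_ac)
    finally show "infnorm (Dl G a b c d) \<le> 3 * M * \<bar>c - d\<bar> * (b - a)" .
  qed
  have B: "infnorm (Dl G a b c d) \<le> 3 * M * \<bar>a - b\<bar> * \<bar>d - c\<bar>"
  proof (rule ext1d[OF gs(2), where D = "\<lambda>c d. Dl G a b c d"])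
    show "Dl G a b c' e = Dl G a b c' d' + Dl G a b d' e" for c' d' e by (rule Dl_add2)
    fix j c d assume cd: "t j \<le> c" "c \<le> d" "d \<le> t (j+1)"
    have "infnorm (Dl G a b c d) \<le> 3 * M * \<bar>c - d\<bar> * \<bar>b - a\<bar>" by (rule A[of j]) (use cd in auto)
    also have "\<dots> = 3 * M * \<bar>a - b\<bar> * (d - c)" using cd by (simp add: abs_if mult_ac)
    finally show "infnorm (Dl G a b c d) \<le> 3 * M * \<bar>a - b\<bar> * (d - c)" .
  qed
  show ?thesis using B by (simp add: G_def abs_minus_commute)
qed

lemma gridb_of_global:
  assumes "\<And>a b c d. infnorm (Dl G a b c d) \<le> K * \<bar>a - b\<bar> * \<bar>c - d\<bar>"
  shows "gridb s t G K"
  using assms unfolding gridb_def by blast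

lemma gridb_of_BMSDD:
  fixes N :: "real \<Rightarrow> real \<Rightarrow> 'a::euclidean_space"
  assumes h: "has_BMSDD s t N L"
  shows "gridb s t N L"
  unfolding gridb_def
proof (intro allI impI)
  fix a b c d
  assume ig: "in_grid s t a c \<and> in_grid s t a d \<and> in_grid s t b c \<and> in_grid s t b d"
  show "infnorm (Dl N a b c d) \<le> L * \<bar>a - b\<bar> * \<bar>c - d\<bar>"
  proof (cases "a = b \<or> c = d")
    case True
    then have "Dl N a b c d = 0" by (auto simp: Dl_def)
    then show ?thesis using True by (auto simp: infnorm_0)
  next
    case False
    define r where "r = (a - b) * (c - d)"
    have r: "r \<noteq> 0" using False by (simp add: r_def)
    have b: "infnorm (bmsdd a b c d N) \<le> L" using h ig False unfolding has_BMSDD_def by blast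
    have "Dl N a b c d = r *\<^sub>R bmsdd a b c d N"
      using r by (simp add: bmsdd_def Dl_def r_def)
    then have "infnorm (Dl N a b c d) = \<bar>r\<bar> * infnorm (bmsdd a b c d N)" by (simp add: infnorm_mul)
    also have "\<dots> \<le> \<bar>r\<bar> * L" using b by (intro mult_left_mono) auto
    finally show ?thesis by (simp add: r_def abs_mult mult_ac)
  qed
qed

lemma err_bound:
  fixes N :: "real \<Rightarrow> real \<Rightarrow> 'a::euclidean_space"
  assumes gs: "gs s" "gs t" and hs: "\<And>i. s (i+1) - s i \<le> H1" and ht: "\<And>j. t (j+1) - t j \<le> H2"
    and K: "\<And>a b c d. infnorm (Dl N a b c d) \<le> K * \<bar>a - b\<bar> * \<bar>c - d\<bar>" and K0: "0 \<le> K"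
  shows "infnorm (coons s t N x y - N x y) \<le> K * H1 * H2"
proof -
  define i where "i = cell s x"
  define j where "j = cell t y"
  define s0 where "s0 = s i"
  define s1 where "s1 = s (i+1)"
  define t0 where "t0 = t j"
  define t1 where "t1 = t (j+1)"
  have x: "s0 \<le> x" "x < s1" using cell_prop[OF gs(1), of x] by (auto simp: s0_def s1_def i_def)
  have y: "t0 \<le> y" "y < t1" using cell_prop[OF gs(2), of y] by (auto simp: t0_def t1_def j_def)
  have H1: "s1 - s0 \<le> H1" using hs[of i] by (simp add: s0_def s1_def)
  have H2: "t1 - t0 \<le> H2" using ht[of j] by (simp add: t0_def t1_def)
  have c: "coons s t N x y = cfr s0 s1 t0 t1 N x y"
    unfolding s0_def s1_def t0_def t1_def using x y
    by (intro coons_cell[OF gs]) (auto simp: s0_def s1_def t0_def t1_def)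
  define A0 where "A0 = (s1 - x) / (s1 - s0)"
  define A1 where "A1 = (x - s0) / (s1 - s0)"
  define B0 where "B0 = (t1 - y) / (t1 - t0)"
  define B1 where "B1 = (y - t0) / (t1 - t0)"
  have A: "0 \<le> A0" "0 \<le> A1" "A0 + A1 = 1" using x
    by (auto simp: A0_def A1_def add_divide_distrib[symmetric])
  have B: "0 \<le> B0" "0 \<le> B1" "B0 + B1 = 1" using y
    by (auto simp: B0_def B1_def add_divide_distrib[symmetric])
  have eq: "N x y - coons s t N x y = (A0 * B0) *\<^sub>R Dl N x s0 y t0 + (A0 * B1) *\<^sub>R Dl N x s0 y t1
      + (A1 * B0) *\<^sub>R Dl N x s1 y t0 + (A1 * B1) *\<^sub>R Dl N x s1 y t1"
    unfolding c A0_def A1_def B0_def B1_def using x y by (intro err_identity) auto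
  have tb: "infnorm (c *\<^sub>R Dl N x sp y tq) \<le> c * (K * H1 * H2)"
    if "0 \<le> c" "\<bar>x - sp\<bar> \<le> H1" "\<bar>y - tq\<bar> \<le> H2" for c sp tq
  proof -
    have "infnorm (Dl N x sp y tq) \<le> K * \<bar>x - sp\<bar> * \<bar>y - tq\<bar>" by (rule K)
    also have "\<dots> \<le> K * H1 * H2" using that K0 by (intro mult_mono) (auto intro: mult_left_mono)
    finally show ?thesis using that(1) by (simp add: infnorm_mul mult_left_mono)
  qed
  have d1: "\<bar>x - s0\<bar> \<le> H1" "\<bar>x - s1\<bar> \<le> H1" using x H1 by auto
  have d2: "\<bar>y - t0\<bar> \<le> H2" "\<bar>y - t1\<bar> \<le> H2" using y H2 by auto
  have "infnorm (coons s t N x y - N x y) = infnorm (N x y - coons s t N x y)" by (rule infnorm_sub)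
  also have "\<dots> \<le> infnorm ((A0 * B0) *\<^sub>R Dl N x s0 y t0) + infnorm ((A0 * B1) *\<^sub>R Dl N x s0 y t1)
      + infnorm ((A1 * B0) *\<^sub>R Dl N x s1 y t0) + infnorm ((A1 * B1) *\<^sub>R Dl N x s1 y t1)"
    unfolding eq by (meson add_mono infnorm_triangle order_trans order_refl)
  also have "\<dots> \<le> (A0 * B0) * (K * H1 * H2) + (A0 * B1) * (K * H1 * H2) + (A1 * B0) * (K * H1 * H2) + (A1 * B1) * (K * H1 * H2)"
    using A B d1 d2 by (intro add_mono tb) auto
  also have "\<dots> = ((A0 + A1) * (B0 + B1)) * (K * H1 * H2)" by (simp add: algebra_simps)
  also have "\<dots> = K * H1 * H2" using A B by simp
  finally show ?thesis .
qed

theorem theorem2: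
  fixes N0 :: "real \<Rightarrow> real \<Rightarrow> real ^ 'm"
    and L :: real
    and ws wt :: "nat \<Rightarrow> (int \<Rightarrow> real) \<times> (int \<Rightarrow> real)"
  assumes "C0_net real_of_int real_of_int N0"
    and "has_BMSDD real_of_int real_of_int N0 L"
    and "\<And>k. ws k \<in> weights"
    and "\<And>k. wt k \<in> weights"
    and "(SUP k. max (mu (ws k)) (mu (wt k))) < sqrt 3 / 3"
  shows "\<exists>F. uniform_limit UNIV
           (\<lambda>k (p :: real \<times> real). coons (lines ws k) (lines wt k) (nets ws wt N0 k) (fst p) (snd p))
           F sequentially"
proof -
  note hB = assms(2) and wS = assms(3) and wT = assms(4)
  define m where "m = (SUP k. max (mu (ws k)) (mu (wt k)))"
  have bdd: "bdd_above (range (\<lambda>k. max (mu (ws k)) (mu (wt k))))"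
    using mu_le2[OF wS] mu_le2[OF wT] by (intro bdd_aboveI[where M=2]) auto
  have mk: "max (mu (ws k)) (mu (wt k)) \<le> m" for k unfolding m_def using bdd by (intro cSUP_upper) auto
  have ms: "mu (ws k) \<le> m" and mt: "mu (wt k) \<le> m" for k using mk[of k] by auto
  have m0: "0 \<le> m"
  proof -
    have "snd (ws 0) 0 - fst (ws 0) 0 \<le> mu (ws 0)" by (rule mu_ge[OF wS])
    moreover have "fst (ws 0) 0 < snd (ws 0) 0" by (rule weightsD[OF wS])
    ultimately show ?thesis using ms[of 0] by linarith
  qed
  have m1: "m < sqrt 3 / 3" using assms(5) by (simp add: m_def)
  have q1: "3 * m^2 < 1"
  proof -
    have "m^2 < (sqrt 3 / 3)^2" using m0 m1 by (intro power_strict_mono) auto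
    also have "\<dots> = 1/3" by (simp add: power_divide)
    finally show ?thesis by simp
  qed
  have LS: "\<And>k. gs (lines ws k) \<and> (\<forall>i. lines ws k (i+1) - lines ws k i \<le> m ^ k)"
    by (rule lines_prop[OF wS ms m0])
  have LT: "\<And>k. gs (lines wt k) \<and> (\<forall>i. lines wt k (i+1) - lines wt k i \<le> m ^ k)"
    by (rule lines_prop[OF wT mt m0])
  have L0: "0 \<le> L"
  proof -
    have r0: "(0::real) \<in> range real_of_int" by (rule range_eqI[of _ _ 0]) simp
    have r1: "(1::real) \<in> range real_of_int" by (rule range_eqI[of _ _ 1]) simp
    have "infnorm (bmsdd 0 1 0 1 N0) \<le> L" using hB r0 r1 unfolding has_BMSDD_def in_grid_def by simp
    then show ?thesis using infnorm_pos_le[of "bmsdd 0 1 0 1 N0"] by linarith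
  qed
  have NB: "gridb (lines ws k) (lines wt k) (nets ws wt N0 k) (3^k * L)" for k
  proof (induction k)
    case 0
    show ?case using gridb_of_BMSDD[OF hB] by simp
  next
    case (Suc k)
    show ?case
      using gbound[OF LS[THEN conjunct1] LT[THEN conjunct1] Suc] by (intro gridb_of_global) (simp add: mult_ac)
  qed
  define F where "F k p = coons (lines ws k) (lines wt k) (nets ws wt N0 k) (fst p) (snd p)" for k p
  define f where "f k p = F (Suc k) p - F k p" for k p
  define c where "c = sqrt (real DIM(real ^ 'm)) * (L * (3 * m^2))"
  have fb: "norm (f k p) \<le> c * (3 * m^2) ^ k" for k p
  proof -
    define G where "G = nets ws wt N0 (Suc k)"
    have Gb: "infnorm (Dl G a b x y) \<le> 3^(Suc k) * L * \<bar>a - b\<bar> * \<bar>x - y\<bar>" for a b x y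
      using gbound[OF LS[THEN conjunct1] LT[THEN conjunct1] NB[of k], of a b x y]
      by (simp add: G_def mult_ac)
    have fe: "f k p = coons (lines ws (Suc k)) (lines wt (Suc k)) G (fst p) (snd p) - G (fst p) (snd p)"
      by (simp only: f_def F_def G_def nets.simps)
    have hs: "\<And>i. lines ws (Suc k) (i+1) - lines ws (Suc k) i \<le> m^Suc k" using LS[of "Suc k"] by blast
    have ht: "\<And>i. lines wt (Suc k) (i+1) - lines wt (Suc k) i \<le> m^Suc k" using LT[of "Suc k"] by blast
    have K0: "0 \<le> 3^(Suc k) * L" using L0 by simp
    have "infnorm (f k p) \<le> 3^(Suc k) * L * m^(Suc k) * m^(Suc k)"
      unfolding fe by (rule err_bound[OF LS[of "Suc k", THEN conjunct1] LT[of "Suc k", THEN conjunct1] hs ht Gb K0])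
    also have "\<dots> = L * (3 * m^2) * (3 * m^2) ^ k" by (simp add: power_mult_distrib power2_eq_square mult_ac)
    finally have "infnorm (f k p) \<le> L * (3 * m^2) * (3 * m^2) ^ k" .
    note fin = this
    have "norm (f k p) \<le> sqrt (real DIM(real ^ 'm)) * infnorm (f k p)" by (rule norm_le_infnorm)
    also have "\<dots> \<le> sqrt (real DIM(real ^ 'm)) * (L * (3 * m^2) * (3 * m^2) ^ k)"
      by (rule mult_left_mono[OF fin]) simp
    also have "\<dots> = c * (3 * m^2) ^ k" by (simp only: c_def mult_ac)
    finally show ?thesis .
  qed
  have sm: "summable (\<lambda>k. c * (3 * m^2) ^ k)"
    using q1 m0 by (intro summable_mult summable_geometric) simp
  have ul: "uniform_limit UNIV (\<lambda>n p. \<Sum>i<n. f i p) (\<lambda>p. suminf (\<lambda>i. f i p)) sequentially"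
    by (rule Weierstrass_m_test[OF _ sm]) (rule fb)
  have tel: "F n p = F 0 p + (\<Sum>i<n. f i p)" for n p
    unfolding f_def by (subst sum_lessThan_telescope) simp
  have dd: "dist (F n p) (F 0 p + suminf (\<lambda>i. f i p)) = dist (\<Sum>i<n. f i p) (suminf (\<lambda>i. f i p))" for n p
  proof -
    have "F n p = F 0 p + (\<Sum>i<n. f i p)" by (rule tel)
    then show ?thesis by (simp only: dist_norm) (simp add: algebra_simps)
  qed
  have "uniform_limit UNIV F (\<lambda>p. F 0 p + suminf (\<lambda>i. f i p)) sequentially"
    using ul unfolding uniform_limit_iff by (simp only: dd)
  then show ?thesis unfolding F_def by blast
qed

end
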